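(* For all $\Sigma\subseteq\mathsf{FOR}$ and $\varphi\in\mathsf{FOR}$: $\Sigma\vdash_{\mathcal{F}SN}\varphi$ if and only if $\Sigma\vDash_{\mathsf{R}^{sn}}\varphi$, where $\mathsf{R}^{sn}$ is the set of Epstein relations $\mathfrak{R}$ that are symmetric and satisfy: for all $\varphi,\psi$, $\langle\neg\varphi,\psi\rangle\in\mathfrak{R}$ implies $\langle\varphi,\psi\rangle\in\mathfrak{R}$.
   Context: Language: propositional letters $\Phi=\{p_0,p_1,\dots\}$; connectives $\neg$, $\lor,\wedge,\to,\leftrightarrow,\vartriangle,\looparrowright$; $\mathsf{FOR}$ the set of all formulas. An Epstein model is $\langle v,\mathfrak{R}\rangle$ with $v:\Phi\to\{0,1\}$ and $\mathfrak{R}\subseteq\mathsf{FOR}^2$ (an Epstein relation); truth: letters via $v$, boolean connectives classical, $\langle v,\mathfrak{R}\rangle\vDash\varphi\vartriangle\psi$ iff both true and $\langle\varphi,\psi\rangle\in\mathfrak{R}$; $\langle v,\mathfrak{R}\rangle\vDash\varphi\looparrowright\psi$ iff $\varphi\to\psi$ true and $\langle\varphi,\psi\rangle\in\mathfrak{R}$. For a set $\mathsf{R}$ of relations, $\Sigma\vDash_{\mathsf{R}}\varphi$ iff for every $\mathfrak{R}\in\mathsf{R}$ and every valuation $v$, if $\langle v,\mathfrak{R}\rangle$ satisfies all of $\Sigma$ then it satisfies $\varphi$. $\mathcal{F}$ is the least set containing all classical tautologies of the language and the axioms $(p\looparrowright q)\to(p\to q)$ and $(p\vartriangle q)\leftrightarrow((p\looparrowright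 q)\wedge(p\wedge q))$, closed under uniform substitution and modus ponens. $\mathcal{F}SN$ is the least set containing $\mathcal{F}$ and the axioms ($p,q$ distinct letters) $(s)\ (p\looparrowright q)\to((q\looparrowright p)\lor\neg(q\to p))$; $(n1)\ (\neg p\looparrowright q)\to((p\looparrowright q)\lor\neg(p\to q))$; $(n2)\ ((\neg\neg p\looparrowright q)\wedge\neg(\neg p\to q))\to(p\looparrowright q)$; $(sn)\ (\neg(p\to q)\wedge(\neg p\looparrowright q))\to(q\looparrowright p)$; $(ns)\ (\neg(\neg p\to q)\wedge(q\looparrowright\neg p))\to(p\looparrowright q)$, closed under uniform substitution and modus ponens. $\Sigma\vdash_{\mathcal{F}SN}\varphi$ iff there is a finite sequence ending in $\varphi$ each member of which is in $\mathcal{F}SN\cup\Sigma$ or follows from two earlier members by modus ponens. *)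

theory Defs
  imports Main
begin

datatype form =
    Var nat
  | Neg form
  | Or form form
  | And form form
  | Imp form form
  | Iff form form
  | EAnd form form
  | EImp form form

fun sat :: "(nat \<Rightarrow> bool) \<Rightarrow> (form \<times> form) set \<Rightarrow> form \<Rightarrow> bool" where
  "sat v R (Var n) = v n"
| "sat v R (Neg a) = (\<not> sat v R a)"
| "sat v R (Or a b) = (sat v R a \<or> sat v R b)"
| "sat v R (And a b) = (sat v R a \<and> sat v R b)"
| "sat v R (Imp a b) = (sat v R a \<longrightarrow> sat v R b)"
| "sat v R (Iff a b) = (sat v R a \<longleftrightarrow> sat v R b)"
| "sat v R (EAnd a b) = (sat v R a \<and> sat v R b \<and> (a, b) \<in> R)"
| "sat v R (EImp a b) = ((sat v R a \<longrightarrow> sat v R b) \<and> (a, b) \<in> R)"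

definition entails :: "(form \<times> form) set set \<Rightarrow> form set \<Rightarrow> form \<Rightarrow> bool" where
  "entails RR \<Sigma> \<phi> \<longleftrightarrow>
     (\<forall>R \<in> RR. \<forall>v. (\<forall>\<sigma>\<in>\<Sigma>. sat v R \<sigma>) \<longrightarrow> sat v R \<phi>)"

definition Rsn :: "(form \<times> form) set set" where
  "Rsn = {R. sym R \<and> (\<forall>\<phi> \<psi>. (Neg \<phi>, \<psi>) \<in> R \<longrightarrow> (\<phi>, \<psi>) \<in> R)}"

text \<open>Classical (boolean) evaluation treating formulas with main connective
  triangle / looparrowright as atoms: their values are arbitrary functions f, g
  of the (syntactic) argument pair.\<close>

fun beval :: "(nat \<Rightarrow> bool) \<Rightarrow> (form \<Rightarrow> form \<Rightarrow> bool) \<Rightarrow> (form \<Rightarrow> form \<Rightarrow> bool) \<Rightarrow> form \<Rightarrow> bool" where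
  "beval v f g (Var n) = v n"
| "beval v f g (Neg a) = (\<not> beval v f g a)"
| "beval v f g (Or a b) = (beval v f g a \<or> beval v f g b)"
| "beval v f g (And a b) = (beval v f g a \<and> beval v f g b)"
| "beval v f g (Imp a b) = (beval v f g a \<longrightarrow> beval v f g b)"
| "beval v f g (Iff a b) = (beval v f g a \<longleftrightarrow> beval v f g b)"
| "beval v f g (EAnd a b) = f a b"
| "beval v f g (EImp a b) = g a b"

definition tautology :: "form \<Rightarrow> bool" where
  "tautology \<phi> \<longleftrightarrow> (\<forall>v f g. beval v f g \<phi>)"

fun subst :: "(nat \<Rightarrow> form) \<Rightarrow> form \<Rightarrow> form" where
  "subst s (Var n) = s n"
| "subst s (Neg a) = Neg (subst s a)"
| "subst s (Or a b) = Or (subst s a) (subst s b)"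
| "subst s (And a b) = And (subst s a) (subst s b)"
| "subst s (Imp a b) = Imp (subst s a) (subst s b)"
| "subst s (Iff a b) = Iff (subst s a) (subst s b)"
| "subst s (EAnd a b) = EAnd (subst s a) (subst s b)"
| "subst s (EImp a b) = EImp (subst s a) (subst s b)"

abbreviation "pp \<equiv> Var 0"
abbreviation "qq \<equiv> Var 1"

inductive_set FSN :: "form set" where
  taut: "tautology \<phi> \<Longrightarrow> \<phi> \<in> FSN"
| ax1: "Imp (EImp pp qq) (Imp pp qq) \<in> FSN"
| ax2: "Iff (EAnd pp qq) (And (EImp pp qq) (And pp qq)) \<in> FSN"
| ax_s: "Imp (EImp pp qq) (Or (EImp qq pp) (Neg (Imp qq pp))) \<in> FSN"
| ax_n1: "Imp (EImp (Neg pp) qq) (Or (EImp pp qq) (Neg (Imp pp qq))) \<in> FSN"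
| ax_n2: "Imp (And (EImp (Neg (Neg pp)) qq) (Neg (Imp (Neg pp) qq))) (EImp pp qq) \<in> FSN"
| ax_sn: "Imp (And (Neg (Imp pp qq)) (EImp (Neg pp) qq)) (EImp qq pp) \<in> FSN"
| ax_ns: "Imp (And (Neg (Imp (Neg pp) qq)) (EImp qq (Neg pp))) (EImp pp qq) \<in> FSN"
| sub: "\<phi> \<in> FSN \<Longrightarrow> subst s \<phi> \<in> FSN"
| mp: "\<phi> \<in> FSN \<Longrightarrow> Imp \<phi> \<psi> \<in> FSN \<Longrightarrow> \<psi> \<in> FSN"

definition derivable :: "form set \<Rightarrow> form \<Rightarrow> bool" where
  "derivable \<Sigma> \<phi> \<longleftrightarrow>
     (\<exists>xs. xs \<noteq> [] \<and> last xs = \<phi> \<and>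
        (\<forall>i < length xs. xs ! i \<in> FSN \<or> xs ! i \<in> \<Sigma> \<or>
           (\<exists>j < i. \<exists>k < i. xs ! k = Imp (xs ! j) (xs ! i))))"

end

theory Submission
  imports Defs
begin

inductive_set cl :: "form set \<Rightarrow> form set" for S :: "form set" where
  fsn: "a \<in> FSN \<Longrightarrow> a \<in> cl S"
| hyp: "a \<in> S \<Longrightarrow> a \<in> cl S"
| mpc: "a \<in> cl S \<Longrightarrow> Imp a b \<in> cl S \<Longrightarrow> b \<in> cl S"

definition valid :: "form set \<Rightarrow> form list \<Rightarrow> bool" where
  "valid S xs \<longleftrightarrow> (\<forall>i < length xs. xs ! i \<in> FSN \<or> xs ! i \<in> S \<or>
           (\<exists>j < i. \<exists>k < i. xs ! k = Imp (xs ! j) (xs ! i)))"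

lemma valid_append:
  assumes "valid S xs" "valid S ys" shows "valid S (xs @ ys)"
  unfolding valid_def
proof (intro allI impI)
  fix i assume i: "i < length (xs @ ys)"
  show "(xs @ ys) ! i \<in> FSN \<or> (xs @ ys) ! i \<in> S \<or>
    (\<exists>j<i. \<exists>k<i. (xs @ ys) ! k = Imp ((xs @ ys) ! j) ((xs @ ys) ! i))"
  proof (cases "i < length xs")
    case True
    with assms(1) show ?thesis unfolding valid_def
      by (auto simp: nth_append) (metis order.strict_trans)
  next
    case False
    define i' where "i' = i - length xs"
    have i': "i' < length ys" "i = length xs + i'" using i False by (auto simp: i'_def)
    from assms(2) i'(1) have "ys ! i' \<in> FSN \<or> ys ! i' \<in> S \<or>
      (\<exists>j<i'. \<exists>k<i'. ys ! k = Imp (ys ! j) (ys ! i'))" unfolding valid_def by blast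
    then show ?thesis
    proof (elim disjE exE conjE)
      fix j k assume "j < i'" "k < i'" "ys ! k = Imp (ys ! j) (ys ! i')"
      then show ?thesis using i'
        by (intro disjI2 exI[of _ "length xs + j"] conjI exI[of _ "length xs + k"]) (auto simp: nth_append)
    qed (use i' in \<open>auto simp: nth_append\<close>)
  qed
qed

lemma cl_derivable: "a \<in> cl S \<Longrightarrow> \<exists>xs. xs \<noteq> [] \<and> last xs = a \<and> valid S xs"
proof (induction rule: cl.induct)
  case (fsn a) then show ?case by (intro exI[of _ "[a]"]) (auto simp: valid_def)
next
  case (hyp a) then show ?case by (intro exI[of _ "[a]"]) (auto simp: valid_def)
next
  case (mpc a b)
  from mpc.IH obtain xs ys where x: "xs \<noteq> []" "last xs = a" "valid S xs"
    and y: "ys \<noteq> []" "last ys = Imp a b" "valid S ys" by blast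
  have v: "valid S (xs @ ys)" using x y valid_append by blast
  have l1: "(xs @ ys) ! (length xs - 1) = a" using x by (simp add: nth_append last_conv_nth)
  have l2: "(xs @ ys) ! (length xs + (length ys - 1)) = Imp a b" using x y
    by (simp add: last_conv_nth)
  have "valid S [b] \<or> True" by simp
  have vb: "valid S (xs @ ys @ [b])"
    unfolding valid_def
  proof (intro allI impI)
    fix i assume i: "i < length (xs @ ys @ [b])"
    show "(xs @ ys @ [b]) ! i \<in> FSN \<or> (xs @ ys @ [b]) ! i \<in> S \<or>
      (\<exists>j<i. \<exists>k<i. (xs @ ys @ [b]) ! k = Imp ((xs @ ys @ [b]) ! j) ((xs @ ys @ [b]) ! i))"
    proof (cases "i < length (xs @ ys)")
      case True
      have "(xs @ ys @ [b]) ! n = (xs @ ys) ! n" if "n < length (xs @ ys)" for n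
        using that by (metis append_assoc nth_append)
      with True v show ?thesis unfolding valid_def
        by (metis order.strict_trans)
    next
      case False
      then have ib: "i = length (xs @ ys)" using i by simp
      have "(xs @ ys @ [b]) ! i = b" using ib by (metis append_assoc nth_append_length)
      moreover have "(xs @ ys @ [b]) ! (length xs - 1) = a" using l1 x
        by (metis append_assoc length_append length_greater_0_conv nth_append trans_less_add1 diff_less zero_less_one)
      moreover have "(xs @ ys @ [b]) ! (length xs + (length ys - 1)) = Imp a b" using l2 y
        by (simp add: nth_append)
      moreover have "length xs - 1 < i" "length xs + (length ys - 1) < i" using ib x(1) y(1) by (cases xs; cases ys; simp)+
      ultimately have "\<exists>j<i. \<exists>k<i. (xs @ ys @ [b]) ! k = Imp ((xs @ ys @ [b]) ! j) ((xs @ ys @ [b]) ! i)"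
        by (intro exI[of _ "length xs - 1"] exI[of _ "length xs + (length ys - 1)"] conjI) simp_all
      then show ?thesis by (intro disjI2)
    qed
  qed
  then show ?case by (intro exI[of _ "xs @ ys @ [b]"]) auto
qed

lemma derivable_cl: "derivable S a \<longleftrightarrow> a \<in> cl S"
proof
  assume "derivable S a"
  then obtain xs where xs: "xs \<noteq> []" "last xs = a" "valid S xs"
    unfolding derivable_def valid_def by blast
  have "\<forall>i < length xs. xs ! i \<in> cl S"
  proof (intro allI)
    fix i show "i < length xs \<longrightarrow> xs ! i \<in> cl S"
    proof (induction i rule: less_induct)
      case (less i)
      show ?case
      proof
        assume i: "i < length xs"
        with xs(3) have "xs ! i \<in> FSN \<or> xs ! i \<in> S \<or>
          (\<exists>j<i. \<exists>k<i. xs ! k = Imp (xs ! j) (xs ! i))" unfolding valid_def by blast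
        then show "xs ! i \<in> cl S"
        proof (elim disjE exE conjE)
          fix j k assume "j < i" "k < i" "xs ! k = Imp (xs ! j) (xs ! i)"
          then show ?thesis using less.IH i by (metis cl.mpc order.strict_trans)
        qed (auto intro: cl.intros)
      qed
    qed
  qed
  moreover have "length xs - 1 < length xs" using xs(1) by simp
  ultimately show "a \<in> cl S" using xs by (metis last_conv_nth)
next
  assume "a \<in> cl S"
  from cl_derivable[OF this] show "derivable S a" unfolding derivable_def valid_def by blast
qed

lemma beval_sat: "beval v (\<lambda>a b. sat v R (EAnd a b)) (\<lambda>a b. sat v R (EImp a b)) \<phi> = sat v R \<phi>"
  by (induction \<phi>) auto

lemma sat_subst: "sat v R (subst s \<phi>) = sat (\<lambda>n. sat v R (s n)) {(a,b). (subst s a, subst s b) \<in> R} \<phi>"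
  by (induction \<phi>) auto

lemma RsnD1: "R \<in> Rsn \<Longrightarrow> (a, b) \<in> R \<Longrightarrow> (b, a) \<in> R"
  unfolding Rsn_def by (blast dest: symD)
lemma RsnD2: "R \<in> Rsn \<Longrightarrow> (Neg a, b) \<in> R \<Longrightarrow> (a, b) \<in> R"
  unfolding Rsn_def by blast
lemma RsnI: "(\<And>a b. (a, b) \<in> R \<Longrightarrow> (b, a) \<in> R) \<Longrightarrow> (\<And>a b. (Neg a, b) \<in> R \<Longrightarrow> (a, b) \<in> R) \<Longrightarrow> R \<in> Rsn"
  unfolding Rsn_def sym_def by blast

lemma Rsn_subst:
  assumes R: "R \<in> Rsn" shows "{(a,b). (subst s a, subst s b) \<in> R} \<in> Rsn"
proof (rule RsnI)
  fix a b
  show "(a, b) \<in> {(a,b). (subst s a, subst s b) \<in> R} \<Longrightarrow> (b, a) \<in> {(a,b). (subst s a, subst s b) \<in> R}"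
    using RsnD1[OF R, of "subst s a" "subst s b"] by simp
  show "(Neg a, b) \<in> {(a,b). (subst s a, subst s b) \<in> R} \<Longrightarrow> (a, b) \<in> {(a,b). (subst s a, subst s b) \<in> R}"
    using RsnD2[OF R, of "subst s a" "subst s b"] by simp
qed

lemma taut_beval: "tautology \<phi> \<Longrightarrow> beval v f g \<phi>"
  unfolding tautology_def by blast

lemma FSN_sound: "\<phi> \<in> FSN \<Longrightarrow> R \<in> Rsn \<Longrightarrow> sat v R \<phi>"
proof (induction arbitrary: v R rule: FSN.induct)
  case (taut \<phi>)
  then show ?case
    using taut_beval[of \<phi> v "\<lambda>a b. sat v R (EAnd a b)" "\<lambda>a b. sat v R (EImp a b)"]
    by (simp only: beval_sat)
next
  case (sub \<phi> s)
  have "{(a,b). (subst s a, subst s b) \<in> R} \<in> Rsn" using sub.prems by (rule Rsn_subst)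
  then have "sat (\<lambda>n. sat v R (s n)) {(a,b). (subst s a, subst s b) \<in> R} \<phi>" by (rule sub.IH)
  then show ?case by (simp only: sat_subst)
next
  case ax1 then show ?case by simp
next
  case ax2 then show ?case by auto
next
  case ax_s then show ?case using RsnD1[OF ax_s, of pp qq] by auto
next
  case ax_n1 then show ?case using RsnD2[OF ax_n1, of pp qq] by auto
next
  case ax_n2 then show ?case using RsnD2[OF ax_n2, of pp qq] RsnD2[OF ax_n2, of "Neg pp" qq] by auto
next
  case ax_sn then show ?case using RsnD2[OF ax_sn, of pp qq] RsnD1[OF ax_sn, of pp qq] by auto
next
  case ax_ns then show ?case using RsnD2[OF ax_ns, of pp qq] RsnD1[OF ax_ns, of qq "Neg pp"] by auto
next
  case (mp \<phi> \<psi>) then show ?case by auto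
qed

lemma cl_sound: "a \<in> cl S \<Longrightarrow> R \<in> Rsn \<Longrightarrow> \<forall>\<sigma>\<in>S. sat v R \<sigma> \<Longrightarrow> sat v R a"
proof (induction rule: cl.induct)
  case (fsn a) then show ?case using FSN_sound by blast
next
  case (hyp a) then show ?case by blast
next
  case (mpc a b) then show ?case by simp
qed

definition inst :: "form \<Rightarrow> form \<Rightarrow> nat \<Rightarrow> form" where
  "inst a b = (\<lambda>n. if n = 0 then a else if n = 1 then b else Var n)"

lemma inst_simps[simp]: "inst a b 0 = a" "inst a b (Suc 0) = b"
  by (auto simp: inst_def)

lemma ax1i: "Imp (EImp a b) (Imp a b) \<in> FSN"
  using FSN.sub[OF FSN.ax1, of "inst a b"] by simp
lemma ax2i: "Iff (EAnd a b) (And (EImp a b) (And a b)) \<in> FSN"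
  using FSN.sub[OF FSN.ax2, of "inst a b"] by simp
lemma axsi: "Imp (EImp a b) (Or (EImp b a) (Neg (Imp b a))) \<in> FSN"
  using FSN.sub[OF FSN.ax_s, of "inst a b"] by simp
lemma axn1i: "Imp (EImp (Neg a) b) (Or (EImp a b) (Neg (Imp a b))) \<in> FSN"
  using FSN.sub[OF FSN.ax_n1, of "inst a b"] by simp
lemma axsni: "Imp (And (Neg (Imp a b)) (EImp (Neg a) b)) (EImp b a) \<in> FSN"
  using FSN.sub[OF FSN.ax_sn, of "inst a b"] by simp
lemma axnsi: "Imp (And (Neg (Imp (Neg a) b)) (EImp b (Neg a))) (EImp a b) \<in> FSN"
  using FSN.sub[OF FSN.ax_ns, of "inst a b"] by simp

lemma cl_taut: "tautology a \<Longrightarrow> a \<in> cl S"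
  by (intro cl.fsn FSN.taut)

lemma deduction:
  assumes "c \<in> cl (insert p M)" and cl: "\<And>x. x \<in> cl M \<Longrightarrow> x \<in> M"
  shows "Imp p c \<in> M"
  using assms(1)
proof (induction rule: cl.induct)
  case (fsn a)
  have t: "Imp a (Imp p a) \<in> cl M" by (rule cl_taut) (simp add: tautology_def)
  have "a \<in> cl M" using fsn by (rule cl.fsn)
  then have "Imp p a \<in> cl M" using t by (rule cl.mpc)
  then show ?case by (rule cl)
next
  case (hyp a)
  show ?case
  proof (cases "a = p")
    case True
    have "Imp p p \<in> cl M" by (rule cl_taut) (simp add: tautology_def)
    then show ?thesis using True by (simp only: cl)
  next
    case False
    then have "a \<in> M" using hyp by simp
    then have "a \<in> cl M" by (rule cl.hyp)
    moreover have "Imp a (Imp p a) \<in> cl M" by (rule cl_taut) (simp add: tautology_def)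
    ultimately have "Imp p a \<in> cl M" by (rule cl.mpc)
    then show ?thesis by (rule cl)
  qed
next
  case (mpc a b)
  have t: "Imp (Imp p (Imp a b)) (Imp (Imp p a) (Imp p b)) \<in> cl M"
    by (rule cl_taut) (simp add: tautology_def)
  have "Imp p (Imp a b) \<in> cl M" using mpc.IH(2) by (rule cl.hyp)
  then have "Imp (Imp p a) (Imp p b) \<in> cl M" using t by (rule cl.mpc)
  moreover have "Imp p a \<in> cl M" using mpc.IH(1) by (rule cl.hyp)
  ultimately have "Imp p b \<in> cl M" using cl.mpc by blast
  then show ?case by (rule cl)
qed

locale mcs =
  fixes M :: "form set"
  assumes clM: "\<And>x. x \<in> cl M \<Longrightarrow> x \<in> M"
    and compl: "\<And>x. x \<in> M \<or> Neg x \<in> M"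
    and cons: "\<And>x. \<not> (x \<in> M \<and> Neg x \<in> M)"
begin

lemma mp: "a \<in> M \<Longrightarrow> Imp a b \<in> M \<Longrightarrow> b \<in> M"
  by (meson clM cl.hyp cl.mpc)

lemma fsn: "a \<in> FSN \<Longrightarrow> a \<in> M"
  by (simp add: cl.fsn clM)

lemma taut: "tautology a \<Longrightarrow> a \<in> M"
  by (simp add: FSN.taut fsn)

lemma t1: "tautology (Imp a b) \<Longrightarrow> a \<in> M \<Longrightarrow> b \<in> M"
  using mp taut by blast
lemma t2: "tautology (Imp a (Imp b c)) \<Longrightarrow> a \<in> M \<Longrightarrow> b \<in> M \<Longrightarrow> c \<in> M"
  using mp taut by blast

lemma negM[simp]: "Neg a \<in> M \<longleftrightarrow> a \<notin> M"
  using compl cons by blast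

lemma impM[simp]: "Imp a b \<in> M \<longleftrightarrow> (a \<in> M \<longrightarrow> b \<in> M)"
proof
  assume "Imp a b \<in> M" then show "a \<in> M \<longrightarrow> b \<in> M" using mp by blast
next
  assume h: "a \<in> M \<longrightarrow> b \<in> M"
  show "Imp a b \<in> M"
  proof (cases "a \<in> M")
    case True
    then have "b \<in> M" using h by blast
    then show ?thesis by (rule t1[rotated]) (simp add: tautology_def)
  next
    case False
    then have "Neg a \<in> M" by simp
    then show ?thesis by (rule t1[rotated]) (simp add: tautology_def)
  qed
qed

lemma orM[simp]: "Or a b \<in> M \<longleftrightarrow> (a \<in> M \<or> b \<in> M)"
proof
  assume h: "Or a b \<in> M"
  show "a \<in> M \<or> b \<in> M"
  proof (rule ccontr)
    assume "\<not> (a \<in> M \<or> b \<in> M)"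
    then have "Neg a \<in> M" "Neg b \<in> M" by auto
    then have "Neg (Or a b) \<in> M" by (rule t2[rotated]) (simp add: tautology_def)
    with h show False by simp
  qed
next
  assume "a \<in> M \<or> b \<in> M"
  then show "Or a b \<in> M"
  proof
    assume "a \<in> M" then show ?thesis by (rule t1[rotated]) (simp add: tautology_def)
  next
    assume "b \<in> M" then show ?thesis by (rule t1[rotated]) (simp add: tautology_def)
  qed
qed

lemma andM[simp]: "And a b \<in> M \<longleftrightarrow> (a \<in> M \<and> b \<in> M)"
proof
  assume h: "And a b \<in> M"
  have "a \<in> M" using h by (rule t1[rotated]) (simp add: tautology_def)
  moreover have "b \<in> M" using h by (rule t1[rotated]) (simp add: tautology_def)
  ultimately show "a \<in> M \<and> b \<in> M" ..
next
  assume "a \<in> M \<and> b \<in> M"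
  then show "And a b \<in> M" using t2[of a b "And a b"] by (simp add: tautology_def)
qed

lemma iffM[simp]: "Iff a b \<in> M \<longleftrightarrow> (a \<in> M \<longleftrightarrow> b \<in> M)"
proof
  assume h: "Iff a b \<in> M"
  have "Imp a b \<in> M" using h by (rule t1[rotated]) (simp add: tautology_def)
  moreover have "Imp b a \<in> M" using h by (rule t1[rotated]) (simp add: tautology_def)
  ultimately show "a \<in> M \<longleftrightarrow> b \<in> M" by auto
next
  assume h: "a \<in> M \<longleftrightarrow> b \<in> M"
  have "Imp a b \<in> M" "Imp b a \<in> M" using h by auto
  then show "Iff a b \<in> M" using t2[of "Imp a b" "Imp b a" "Iff a b"] by (simp add: tautology_def, blast)
qed

definition RM :: "(form \<times> form) set" where
  "RM = {(x,y). (Imp x y \<in> M \<longrightarrow> EImp x y \<in> M) \<and> (Imp y x \<in> M \<longrightarrow> EImp y x \<in> M)}"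

lemma s': "EImp a b \<in> M \<Longrightarrow> Imp b a \<in> M \<Longrightarrow> EImp b a \<in> M"
  using mp[OF _ fsn[OF axsi]] by (metis orM negM)
lemma ax1': "EImp a b \<in> M \<Longrightarrow> Imp a b \<in> M"
  using mp[OF _ fsn[OF ax1i]] by blast
lemma n1': "EImp (Neg a) b \<in> M \<Longrightarrow> Imp a b \<in> M \<Longrightarrow> EImp a b \<in> M"
  using mp[OF _ fsn[OF axn1i]] by (metis orM negM)
lemma sn': "Imp a b \<notin> M \<Longrightarrow> EImp (Neg a) b \<in> M \<Longrightarrow> EImp b a \<in> M"
  using mp[OF _ fsn[OF axsni]] by (metis andM negM)
lemma ns': "Imp (Neg a) b \<notin> M \<Longrightarrow> EImp b (Neg a) \<in> M \<Longrightarrow> EImp a b \<in> M"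
  using mp[OF _ fsn[OF axnsi]] by (metis andM negM)

lemma RM_Rsn: "RM \<in> Rsn"
  unfolding Rsn_def
proof (intro CollectI conjI allI impI)
  show "sym RM" unfolding sym_def RM_def by auto
next
  fix p q assume h: "(Neg p, q) \<in> RM"
  then have h1: "Imp (Neg p) q \<in> M \<Longrightarrow> EImp (Neg p) q \<in> M"
    and h2: "Imp q (Neg p) \<in> M \<Longrightarrow> EImp q (Neg p) \<in> M" unfolding RM_def by auto
  show "(p, q) \<in> RM"
  proof (cases "p \<in> M"; cases "q \<in> M")
    assume "p \<in> M" "q \<in> M"
    then have "EImp p q \<in> M" using h1 n1' by simp
    then show ?thesis using s' unfolding RM_def by blast
  next
    assume a: "p \<in> M" "q \<notin> M"
    then have "EImp q p \<in> M" using h1 sn'[of p q] by simp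
    then show ?thesis using a unfolding RM_def by auto
  next
    assume a: "p \<notin> M" "q \<in> M"
    then have "EImp p q \<in> M" using h1 n1' by simp
    then show ?thesis using a unfolding RM_def by auto
  next
    assume a: "p \<notin> M" "q \<notin> M"
    then have "EImp p q \<in> M" using h2 ns'[of p q] by simp
    then show ?thesis using s' unfolding RM_def by blast
  qed
qed

lemma truth: "sat (\<lambda>n. Var n \<in> M) RM \<phi> \<longleftrightarrow> \<phi> \<in> M"
proof (induction \<phi>)
  case (EImp a b)
  have "EImp a b \<in> M \<longleftrightarrow> (Imp a b \<in> M \<and> (a, b) \<in> RM)"
    using ax1' s' unfolding RM_def by blast
  then show ?case using EImp by simp
next
  case (EAnd a b)
  have "EAnd a b \<in> M \<longleftrightarrow> (EImp a b \<in> M \<and> a \<in> M \<and> b \<in> M)"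
    using fsn[OF ax2i, of a b] by simp
  moreover have "EImp a b \<in> M \<longleftrightarrow> (Imp a b \<in> M \<and> (a, b) \<in> RM)"
    using ax1' s' unfolding RM_def by blast
  ultimately show ?case using EAnd by auto
qed auto

end

lemma completeness:
  assumes "\<phi> \<notin> cl S"
  shows "\<not> entails Rsn S \<phi>"
proof -
  define A where "A = {T. S \<subseteq> T \<and> (\<forall>x. x \<in> cl T \<longrightarrow> x \<in> T) \<and> \<phi> \<notin> T}"
  have clcl: "x \<in> cl S" if "x \<in> cl (cl S)" for x
    using that by (induction rule: cl.induct) (auto intro: cl.intros)
  have "cl S \<in> A" unfolding A_def using assms clcl by (auto intro: cl.hyp)
  then have ne: "A \<noteq> {}" by blast
  have ch: "\<Union>C \<in> A" if "C \<noteq> {}" "subset.chain A C" for C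
  proof -
    have CA: "C \<subseteq> A" and lin: "\<forall>X\<in>C. \<forall>Y\<in>C. X \<subseteq> Y \<or> Y \<subseteq> X"
      using that(2) unfolding subset.chain_def by auto
    have closed: "x \<in> \<Union>C" if "x \<in> cl (\<Union>C)" for x
      using that
    proof (induction rule: cl.induct)
      case (fsn a)
      obtain T where "T \<in> C" using \<open>C \<noteq> {}\<close> by blast
      then have "a \<in> T" using fsn CA unfolding A_def by (auto intro: cl.fsn)
      then show ?case using \<open>T \<in> C\<close> by blast
    next
      case (hyp a) then show ?case by simp
    next
      case (mpc a b)
      then obtain X Y where "X \<in> C" "Y \<in> C" "a \<in> X" "Imp a b \<in> Y" by blast
      then obtain Z where "Z \<in> C" "a \<in> Z" "Imp a b \<in> Z" using lin by blast
      moreover have "b \<in> cl Z" using \<open>a \<in> Z\<close> \<open>Imp a b \<in> Z\<close> by (meson cl.hyp cl.mpc)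
      moreover have "\<forall>x. x \<in> cl Z \<longrightarrow> x \<in> Z" using \<open>Z \<in> C\<close> CA unfolding A_def by blast
      ultimately have "b \<in> Z" by blast
      then show ?case using \<open>Z \<in> C\<close> by blast
    qed
    show ?thesis unfolding A_def using CA closed \<open>C \<noteq> {}\<close> unfolding A_def by auto
  qed
  obtain M where MA: "M \<in> A" and max: "\<forall>X\<in>A. M \<subseteq> X \<longrightarrow> X = M"
    using subset_Zorn_nonempty[OF ne ch] by blast
  have clM: "x \<in> M" if "x \<in> cl M" for x using MA that unfolding A_def by blast
  have phiM: "\<phi> \<notin> M" using MA unfolding A_def by blast
  have SM: "S \<subseteq> M" using MA unfolding A_def by blast
  have ext: "Imp p \<phi> \<in> M" if "p \<notin> M" for p
  proof -
    have clcl2: "x \<in> cl (insert p M)" if "x \<in> cl (cl (insert p M))" for x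
      using that by (induction rule: cl.induct) (auto intro: cl.intros)
    have sub: "M \<subseteq> cl (insert p M)" by (auto intro: cl.hyp)
    have "cl (insert p M) \<noteq> M" using \<open>p \<notin> M\<close> by (auto intro: cl.hyp)
    then have "cl (insert p M) \<notin> A" using max sub by blast
    then have "\<phi> \<in> cl (insert p M)" using SM sub clcl2 unfolding A_def by blast
    then show ?thesis using deduction clM by blast
  qed
  interpret mcs M
  proof
    fix x show "x \<in> cl M \<Longrightarrow> x \<in> M" by (rule clM)
  next
    fix x show "x \<in> M \<or> Neg x \<in> M"
    proof (rule ccontr)
      assume "\<not> (x \<in> M \<or> Neg x \<in> M)"
      then have "Imp x \<phi> \<in> M" "Imp (Neg x) \<phi> \<in> M" using ext by auto
      moreover have "Imp (Imp x \<phi>) (Imp (Imp (Neg x) \<phi>) \<phi>) \<in> M"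
        by (rule clM, rule cl_taut) (simp add: tautology_def, blast)
      ultimately have "\<phi> \<in> M" by (meson clM cl.hyp cl.mpc)
      with phiM show False by blast
    qed
  next
    fix x show "\<not> (x \<in> M \<and> Neg x \<in> M)"
    proof
      assume h: "x \<in> M \<and> Neg x \<in> M"
      have "Imp x (Imp (Neg x) \<phi>) \<in> M"
        by (rule clM, rule cl_taut) (simp add: tautology_def)
      with h have "\<phi> \<in> M" by (meson clM cl.hyp cl.mpc)
      with phiM show False by blast
    qed
  qed
  have "\<forall>\<sigma>\<in>S. sat (\<lambda>n. Var n \<in> M) RM \<sigma>" using SM truth by blast
  moreover have "\<not> sat (\<lambda>n. Var n \<in> M) RM \<phi>" using truth phiM by blast
  ultimately show ?thesis unfolding entails_def using RM_Rsn by blast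
qed

theorem mainTheorem18:
  fixes \<Sigma> :: "form set" and \<phi> :: form
  shows "derivable \<Sigma> \<phi> \<longleftrightarrow> entails Rsn \<Sigma> \<phi>"
proof
  assume "derivable \<Sigma> \<phi>"
  then have "\<phi> \<in> cl \<Sigma>" by (simp add: derivable_cl)
  then show "entails Rsn \<Sigma> \<phi>" unfolding entails_def using cl_sound by blast
next
  assume "entails Rsn \<Sigma> \<phi>"
  then show "derivable \<Sigma> \<phi>" using completeness derivable_cl by blast
qed

end
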